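(* Let $\Omega$ be a compact Hausdorff space, let $E\subset \Omega$ be a closed set, and let $J=\{f\in C(\Omega): f(e)=0 \text{ for all } e\in E\}$. Then the pair $(C(\Omega),J)$ has the compact quotient lifting property (CQLP).
   Context: $C(\Omega)$ denotes the Banach space of real-valued continuous functions on $\Omega$ with the supremum norm. For a Banach space $X$ and a closed subspace $J\subset X$, let $\pi:X\to X/J$ be the quotient map. The pair $(X,J)$ has the compact quotient lifting property (CQLP) if for every Banach space $Z$ and every compact linear operator $T:Z\to X/J$ there is a compact linear operator $S:Z\to X$ with $\pi\circ S=T$ and $\|S\|=\|T\|$. *)

theory Defs
  imports "HOL-Analysis.Analysis"
begin

text \<open>The quotient X/J of a normed space X by a closed subspace J is modelled by the
cosets x + J (sets of representatives).\<close>

definition coset :: "'x::real_normed_vector set \<Rightarrow> 'x \<Rightarrow> 'x set" where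
  "coset J x = (\<lambda>j. x + j) ` J"

definition qnorm :: "'x::real_normed_vector set \<Rightarrow> real" where
  "qnorm A = (INF a\<in>A. norm a)"

definition qdist :: "'x::real_normed_vector set \<Rightarrow> 'x set \<Rightarrow> real" where
  "qdist A B = (INF p\<in>A \<times> B. norm (fst p - snd p))"

definition quot_linear :: "'x::real_normed_vector set \<Rightarrow> ('z::real_normed_vector \<Rightarrow> 'x set) \<Rightarrow> bool" where
  "quot_linear J T \<longleftrightarrow>
     (\<forall>z. T z \<in> range (coset J)) \<and>
     (\<forall>z w a b x y. x \<in> T z \<longrightarrow> y \<in> T w \<longrightarrow> a *\<^sub>R x + b *\<^sub>R y \<in> T (a *\<^sub>R z + b *\<^sub>R w))"

definition quot_compact_op :: "'x::real_normed_vector set \<Rightarrow> ('z::real_normed_vector \<Rightarrow> 'x set) \<Rightarrow> bool" where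
  "quot_compact_op J T \<longleftrightarrow> quot_linear J T \<and>
     (\<forall>s::nat \<Rightarrow> 'z. (\<forall>n. norm (s n) \<le> 1) \<longrightarrow>
        (\<exists>r L. strict_mono r \<and> L \<in> range (coset J) \<and>
               (\<lambda>n. qdist (T (s (r n))) L) \<longlonglongrightarrow> 0))"

definition quot_opnorm :: "('z::real_normed_vector \<Rightarrow> 'x::real_normed_vector set) \<Rightarrow> real" where
  "quot_opnorm T = (SUP z\<in>cball 0 1. qnorm (T z))"

definition compact_op :: "('z::real_normed_vector \<Rightarrow> 'x::real_normed_vector) \<Rightarrow> bool" where
  "compact_op S \<longleftrightarrow> bounded_linear S \<and> compact (closure (S ` cball 0 1))"

definition vanishing_ideal :: "'a::topological_space set \<Rightarrow> ('a \<Rightarrow>\<^sub>C real) set" where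
  "vanishing_ideal E = {f. \<forall>e\<in>E. apply_bcontfun f e = 0}"

end

theory Submission
  imports Defs "HOL-Library.FuncSet"
begin


lemma normal_eucl:
  assumes "compact (UNIV::'a::t2_space set)"
  shows "normal_space (euclidean::'a topology)"
proof (rule compact_Hausdorff_or_regular_imp_normal_space)
  show "compact_space (euclidean::'a topology)"
    using assms by (simp add: compact_space_def)
  show "Hausdorff_space (euclidean::'a topology) \<or> regular_space euclidean"
    unfolding Hausdorff_space_def by (metis disjnt_def hausdorff open_openin)
qed

lemma tietze_nonneg:
  fixes E :: "'a::t2_space set"
  assumes "compact (UNIV::'a set)" "closed E" "continuous_on E (f::'a \<Rightarrow> real)" "\<And>x. x \<in> E \<Longrightarrow> 0 \<le> f x \<and> f x \<le> b" "0 \<le> b"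
  obtains g where "continuous_on UNIV g" "\<And>x. x \<in> E \<Longrightarrow> g x = f x" "\<And>x. 0 \<le> g x \<and> g x \<le> b"
proof -
  have "normal_space (euclidean::'a topology)" using normal_eucl assms(1) .
  moreover have "closedin euclidean E" using assms(2) by simp
  moreover have "continuous_map (subtopology euclidean E) euclideanreal f" using assms(3) by simp
  moreover have "f ` E \<subseteq> {0..b}" using assms(4) by auto
  ultimately obtain g where "continuous_map euclidean euclideanreal g" 
        "\<And>x. x \<in> E \<Longrightarrow> g x = f x" "g ` topspace euclidean \<subseteq> {0..b}"
    using Tietze_extension_closed_real_interval assms(5) by metis
  then show ?thesis using that by (simp add: image_subset_iff)
qed

lemma approx_step:
  fixes g :: "'a::t2_space \<Rightarrow> 'b::real_normed_vector"
  assumes cU: "compact (UNIV::'a set)" and cE: "closed E" and cg: "continuous_on E g"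
    and gb: "\<And>e. e\<in>E \<Longrightarrow> norm (g e) \<le> B" and B0: "0 \<le> B" and d: "0 < \<delta>"
  obtains h where "continuous_on UNIV h" "\<And>x. norm (h x) \<le> B" "\<And>e. e\<in>E \<Longrightarrow> norm (g e - h e) \<le> \<delta>"
proof (cases "E = {}")
  case True then show thesis using that[of "\<lambda>x. 0"] B0 by auto
next
  case False
  have compE: "compact E" using compact_Int_closed[OF cU cE] by simp
  have "compact (g ` E)" by (rule compact_continuous_image[OF cg compE])
  then obtain W where W: "finite W" "W \<subseteq> g ` E" "g ` E \<subseteq> (\<Union>v\<in>W. ball v \<delta>)"
    using seq_compact_imp_totally_bounded[OF compact_imp_seq_compact] d by metis
  define a where "a v e = max 0 (\<delta> - norm (g e - v))" for v e
  have ca: "continuous_on E (a v)" for v unfolding a_def by (intro continuous_intros cg)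
  have ab: "0 \<le> a v e \<and> a v e \<le> \<delta>" if "e\<in>E" for v e using d unfolding a_def by auto
  have "\<forall>v\<in>W. \<exists>f. continuous_on UNIV f \<and> (\<forall>e\<in>E. f e = a v e) \<and> (\<forall>x. 0 \<le> f x \<and> f x \<le> \<delta>)"
  proof
    fix v
    obtain f where "continuous_on UNIV f" "\<And>x. x \<in> E \<Longrightarrow> f x = a v x" "\<And>x. 0 \<le> f x \<and> f x \<le> \<delta>"
      using tietze_nonneg[OF cU cE ca ab] d by (metis less_imp_le)
    then show "\<exists>f. continuous_on UNIV f \<and> (\<forall>e\<in>E. f e = a v e) \<and> (\<forall>x. 0 \<le> f x \<and> f x \<le> \<delta>)" by blast
  qed
  then obtain A where A: "\<And>v. v\<in>W \<Longrightarrow> continuous_on UNIV (A v)" "\<And>v e. v\<in>W \<Longrightarrow> e\<in>E \<Longrightarrow> A v e = a v e"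
      "\<And>v x. v\<in>W \<Longrightarrow> 0 \<le> A v x" by metis
  define s where "s x = (\<Sum>v\<in>W. A v x)" for x
  have cs: "continuous_on UNIV s" unfolding s_def by (intro continuous_on_sum A(1))
  have s0: "0 \<le> s x" for x unfolding s_def by (intro sum_nonneg A(3))
  have spos: "0 < s e" if "e\<in>E" for e
  proof -
    have "g e \<in> g ` E" using \<open>e \<in> E\<close> by simp
    then obtain v where v: "v \<in> W" "g e \<in> ball v \<delta>" using W(3) by auto
    have "0 < a v e" using v unfolding a_def by (auto simp: dist_norm norm_minus_commute)
    also have "a v e = A v e" using A(2) v that by simp
    also have "A v e \<le> s e" unfolding s_def using W(1) v(1) A(3) by (intro member_le_sum) auto
    finally show ?thesis .
  qed
  obtain e0 where e0: "e0 \<in> E" "\<And>e. e\<in>E \<Longrightarrow> s e0 \<le> s e"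
    using continuous_attains_inf[OF compE False continuous_on_subset[OF cs]] by auto
  define m where "m = s e0"
  have m0: "0 < m" using spos e0 m_def by auto
  have mx: "0 < max (s x) m" for x using m0 by simp
  define h where "h x = (\<Sum>v\<in>W. A v x *\<^sub>R v) /\<^sub>R max (s x) m" for x
  show thesis
  proof (rule that)
    show "continuous_on UNIV h" unfolding h_def
      by (intro continuous_intros A(1) cs) (metis mx less_irrefl)
  next
    fix x
    have vB: "norm v \<le> B" if "v\<in>W" for v using W(2) gb that by auto
    have "norm (\<Sum>v\<in>W. A v x *\<^sub>R v) \<le> (\<Sum>v\<in>W. norm (A v x *\<^sub>R v))" by (rule norm_sum)
    also have "\<dots> \<le> (\<Sum>v\<in>W. A v x * B)"
      by (intro sum_mono) (simp add: A(3) mult_left_mono vB)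
    also have "\<dots> = s x * B" unfolding s_def by (simp add: sum_distrib_right)
    also have "\<dots> \<le> max (s x) m * B" using B0 by (simp add: mult_right_mono)
    finally show "norm (h x) \<le> B" unfolding h_def using mx[of x]
      by (simp add: field_simps)
  next
    fix e assume e: "e \<in> E"
    have me: "max (s e) m = s e" using e0 e m_def by auto
    have "(\<Sum>v\<in>W. A v e *\<^sub>R (g e - v)) = s e *\<^sub>R g e - (\<Sum>v\<in>W. A v e *\<^sub>R v)"
      unfolding s_def by (simp add: scaleR_diff_right sum_subtractf scaleR_sum_left)
    hence eq: "g e - h e = (\<Sum>v\<in>W. A v e *\<^sub>R (g e - v)) /\<^sub>R s e"
      unfolding h_def me using spos[OF e] by (simp add: scaleR_diff_right)
    have "norm (\<Sum>v\<in>W. A v e *\<^sub>R (g e - v)) \<le> (\<Sum>v\<in>W. A v e * \<delta>)"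
    proof -
      have "norm (\<Sum>v\<in>W. A v e *\<^sub>R (g e - v)) \<le> (\<Sum>v\<in>W. norm (A v e *\<^sub>R (g e - v)))" by (rule norm_sum)
      also have "\<dots> \<le> (\<Sum>v\<in>W. A v e * \<delta>)"
      proof (intro sum_mono)
        fix v assume v: "v \<in> W"
        show "norm (A v e *\<^sub>R (g e - v)) \<le> A v e * \<delta>"
        proof (cases "A v e = 0")
          case True then show ?thesis by simp
        next
          case False
          then have "0 < a v e" using A(2)[OF v e] A(3)[OF v, of e] by simp
          then have "norm (g e - v) < \<delta>" unfolding a_def by simp
          then show ?thesis using A(3)[OF v, of e] by (simp add: mult_left_mono)
        qed
      qed
      finally show ?thesis .
    qed
    also have "\<dots> = s e * \<delta>" unfolding s_def by (simp add: sum_distrib_right)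
    finally show "norm (g e - h e) \<le> \<delta>" unfolding eq using spos[OF e]
      by (simp add: field_simps)
  qed
qed

lemma extend_unbounded:
  fixes g :: "'a::t2_space \<Rightarrow> 'b::banach"
  assumes cU: "compact (UNIV::'a set)" and cE: "closed E" and cg: "continuous_on E g"
    and gb: "\<And>e. e\<in>E \<Longrightarrow> norm (g e) \<le> r" and r0: "0 \<le> r"
  obtains G where "continuous_on UNIV G" "\<And>e. e\<in>E \<Longrightarrow> G e = g e"
proof -
  define b where "b n = (r+1) / 2^n" for n :: nat
  have bpos: "0 < b n" for n unfolding b_def using r0 by simp
  have ex: "\<exists>h. continuous_on UNIV h \<and> (\<forall>x. norm (h x) \<le> b n) \<and> (\<forall>e\<in>E. norm (f e - h e) \<le> b (Suc n))"
    if fc: "continuous_on E f" and fb: "\<forall>e\<in>E. norm (f e) \<le> b n" for f :: "'a \<Rightarrow> 'b" and n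
  proof -
    have "0 \<le> b n" "0 < b (Suc n)" using bpos[of n] bpos[of "Suc n"] by auto
    then obtain h where "continuous_on UNIV h" "\<And>x. norm (h x) \<le> b n" "\<And>e. e\<in>E \<Longrightarrow> norm (f e - h e) \<le> b (Suc n)"
      using approx_step[OF cU cE fc, of "b n" "b (Suc n)"] fb by blast
    then show ?thesis by blast
  qed
  define H where "H f n = (SOME h. continuous_on UNIV h \<and> (\<forall>x. norm (h x) \<le> b n) \<and> (\<forall>e\<in>E. norm (f e - h e) \<le> b (Suc n)))" for f :: "'a \<Rightarrow> 'b" and n
  have H: "continuous_on UNIV (H f n) \<and> (\<forall>x. norm (H f n x) \<le> b n) \<and> (\<forall>e\<in>E. norm (f e - H f n e) \<le> b (Suc n))"
    if "continuous_on E f" "\<forall>e\<in>E. norm (f e) \<le> b n" for f n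
    unfolding H_def by (rule someI_ex[OF ex[OF that]])
  define gs where "gs = rec_nat g (\<lambda>n f. \<lambda>e. f e - H f n e)"
  have gs0: "gs 0 = g" and gsS: "gs (Suc n) = (\<lambda>e. gs n e - H (gs n) n e)" for n
    unfolding gs_def by simp_all
  have inv: "continuous_on E (gs n) \<and> (\<forall>e\<in>E. norm (gs n e) \<le> b n)" for n
  proof (induction n)
    case 0
    then show ?case using cg gb unfolding gs0 b_def by (auto intro: order_trans[OF gb])
  next
    case (Suc n)
    have h: "continuous_on UNIV (H (gs n) n)" "\<forall>e\<in>E. norm (gs n e - H (gs n) n e) \<le> b (Suc n)"
      using H[of "gs n" n] Suc by auto
    show ?case unfolding gsS
      using Suc h continuous_on_subset[OF h(1)] by (auto intro!: continuous_on_diff)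
  qed
  define hs where "hs n = H (gs n) n" for n
  have hsc: "continuous_on UNIV (hs n)" and hsb: "norm (hs n x) \<le> b n" for n x
    using H[of "gs n" n] inv[of n] unfolding hs_def by auto
  have tele: "(\<Sum>k<n. hs k e) = g e - gs n e" for n e
    by (induction n) (simp_all add: gs0 gsS hs_def)
  have sb: "summable b"
  proof -
    have "b = (\<lambda>n. (r+1) * (1/2)^n)" unfolding b_def by (auto simp: field_simps power_divide)
    then show ?thesis by (simp add: summable_geometric)
  qed
  have ul: "uniform_limit UNIV (\<lambda>n x. \<Sum>i<n. hs i x) (\<lambda>x. suminf (\<lambda>i. hs i x)) sequentially"
    by (rule Weierstrass_m_test[OF _ sb]) (use hsb in auto)
  have cG: "continuous_on UNIV (\<lambda>x. suminf (\<lambda>i. hs i x))"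
    by (rule uniform_limit_theorem[OF _ ul]) (auto intro!: always_eventually continuous_on_sum hsc)
  have b0: "b \<longlonglongrightarrow> 0" unfolding b_def by (rule LIMSEQ_divide_realpow_zero) simp
  show thesis
  proof (rule that[OF cG])
    fix e assume e: "e \<in> E"
    have "(\<lambda>n. gs n e) \<longlonglongrightarrow> 0"
      by (rule Lim_null_comparison[OF _ b0]) (use inv e in auto)
    then have "(\<lambda>n. g e - gs n e) \<longlonglongrightarrow> g e - 0" by (intro tendsto_intros)
    then have "(\<lambda>i. hs i e) sums g e" unfolding sums_def tele by simp
    then show "suminf (\<lambda>i. hs i e) = g e" by (rule sums_unique[symmetric])
  qed
qed

lemma extend_banach:
  fixes g :: "'a::t2_space \<Rightarrow> 'b::banach"
  assumes cU: "compact (UNIV::'a set)" and cE: "closed E" and cg: "continuous_on E g"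
    and gb: "\<And>e. e\<in>E \<Longrightarrow> norm (g e) \<le> r" and r0: "0 \<le> r"
  obtains G where "continuous_on UNIV G" "\<And>e. e\<in>E \<Longrightarrow> G e = g e" "\<And>x. norm (G x) \<le> r"
proof (cases "r = 0")
  case True
  then show thesis using that[of "\<lambda>x. 0"] gb by auto
next
  case False
  then have rp: "0 < r" using r0 by simp
  obtain G0 where G0: "continuous_on UNIV G0" "\<And>e. e\<in>E \<Longrightarrow> G0 e = g e"
    using extend_unbounded[OF cU cE cg gb r0] by blast
  have mp: "0 < max r (norm (G0 x))" for x using rp by simp
  show thesis
  proof (rule that[of "\<lambda>x. (r / max r (norm (G0 x))) *\<^sub>R G0 x"])
    show "continuous_on UNIV (\<lambda>x. (r / max r (norm (G0 x))) *\<^sub>R G0 x)"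
      by (intro continuous_intros G0(1)) (metis mp less_irrefl)
  next
    fix e assume "e \<in> E"
    then have "max r (norm (G0 e)) = r" using G0(2) gb by simp
    then show "(r / max r (norm (G0 e))) *\<^sub>R G0 e = g e" using rp G0(2) \<open>e\<in>E\<close> by simp
  next
    fix x
    have "norm ((r / max r (norm (G0 x))) *\<^sub>R G0 x) = r * (norm (G0 x) / max r (norm (G0 x)))"
      using rp mp[of x] by (simp add: abs_of_pos)
    also have "\<dots> \<le> r * 1" using rp mp[of x] by (intro mult_left_mono) (auto simp: field_simps)
    finally show "norm ((r / max r (norm (G0 x))) *\<^sub>R G0 x) \<le> r" by simp
  qed
qed



lemma mem_coset: "f \<in> coset J c \<longleftrightarrow> f - c \<in> J"
  unfolding coset_def image_iff by (metis add_diff_cancel_left' diff_add_cancel add.commute)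

lemma mem_VI: "f \<in> vanishing_ideal E \<longleftrightarrow> (\<forall>e\<in>E. apply_bcontfun f e = 0)"
  unfolding vanishing_ideal_def by simp

lemma agree: "f \<in> coset (vanishing_ideal E) c \<Longrightarrow> e \<in> E \<Longrightarrow> apply_bcontfun f e = apply_bcontfun c e"
  unfolding mem_coset mem_VI by simp

lemma self_in_coset: "c \<in> coset (vanishing_ideal E) c"
  unfolding mem_coset mem_VI by simp

lemma coset_eq:
  assumes "x - y \<in> vanishing_ideal E"
  shows "coset (vanishing_ideal E) x = coset (vanishing_ideal E) y"
  using assms unfolding set_eq_iff mem_coset mem_VI by simp

lemma qnorm_le: "a \<in> A \<Longrightarrow> qnorm A \<le> norm a"
  unfolding qnorm_def by (rule cINF_lower) (auto intro: bdd_belowI2[of _ 0])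

lemma qnorm_ge: "A \<noteq> {} \<Longrightarrow> (\<And>a. a \<in> A \<Longrightarrow> c \<le> norm a) \<Longrightarrow> c \<le> qnorm A"
  unfolding qnorm_def by (rule cINF_greatest) auto

lemma qdist_ge: "A \<noteq> {} \<Longrightarrow> B \<noteq> {} \<Longrightarrow> (\<And>a b. a \<in> A \<Longrightarrow> b \<in> B \<Longrightarrow> c \<le> norm (a - b)) \<Longrightarrow> c \<le> qdist A B"
  unfolding qdist_def by (rule cINF_greatest) auto

lemma eval_le: "\<bar>apply_bcontfun (f::'a::topological_space \<Rightarrow>\<^sub>C real) x\<bar> \<le> norm f"
  using norm_bounded[of f x] by simp

lemma scale_bound:
  fixes f :: "'z::real_normed_vector \<Rightarrow> real"
  assumes sc: "\<And>a z. f (a *\<^sub>R z) = a * f z" and b: "\<And>u. norm u \<le> 1 \<Longrightarrow> \<bar>f u\<bar> \<le> c"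
  shows "\<bar>f z\<bar> \<le> c * norm z"
proof (cases "z = 0")
  case True
  have "f 0 = 0" using sc[of 0 0] by simp
  then show ?thesis using True by simp
next
  case False
  define u where "u = (1 / norm z) *\<^sub>R z"
  have nu: "norm u \<le> 1" unfolding u_def using False by simp
  have "z = norm z *\<^sub>R u" unfolding u_def using False by simp
  then have "f z = norm z * f u" using sc by metis
  then have "\<bar>f z\<bar> = norm z * \<bar>f u\<bar>" by (simp add: abs_mult)
  also have "\<dots> \<le> norm z * c" using b[OF nu] by (simp add: mult_left_mono)
  finally show ?thesis by (simp add: mult.commute)
qed

lemma floor_eq_close:
  fixes s t :: real
  assumes "\<lfloor>s\<rfloor> = \<lfloor>t\<rfloor>"
  shows "\<bar>s - t\<bar> < 1"
proof -
  have "s < \<lfloor>s\<rfloor> + 1" "t < \<lfloor>t\<rfloor> + 1" "\<lfloor>s\<rfloor> \<le> s" "\<lfloor>t\<rfloor> \<le> t" by linarith+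
  then show ?thesis using assms by linarith
qed

lemma finite_net_functionals:
  fixes F :: "('z::real_normed_vector \<Rightarrow>\<^sub>L real) set"
  assumes fF: "finite F" and e: "0 < \<epsilon>"
  shows "\<exists>N. finite N \<and> N \<subseteq> cball 0 1 \<and>
     (\<forall>z\<in>cball 0 1. \<exists>w\<in>N. \<forall>k\<in>F. \<bar>blinfun_apply k z - blinfun_apply k w\<bar> < \<epsilon>)"
proof -
  define c where "c = (\<Sum>k\<in>F. norm k)"
  have kc: "norm k \<le> c" if "k \<in> F" for k
    unfolding c_def using fF that by (intro member_le_sum) auto
  define m where "m = \<lceil>c / \<epsilon>\<rceil>"
  define cell where "cell z = restrict (\<lambda>k. \<lfloor>blinfun_apply k z / \<epsilon>\<rfloor>) F" for z
  have cellin: "cell z \<in> (\<Pi>\<^sub>E k\<in>F. {-m..m})" if "z \<in> cball 0 1" for z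
  proof -
    have "\<lfloor>blinfun_apply k z / \<epsilon>\<rfloor> \<in> {-m..m}" if k: "k \<in> F" for k
    proof -
      have "\<bar>blinfun_apply k z\<bar> \<le> norm k * norm z" using norm_blinfun[of k z] by simp
      also have "\<dots> \<le> c * 1" using kc[OF k] \<open>z \<in> cball 0 1\<close>
        by (intro mult_mono) (auto simp: order_trans[OF norm_ge_zero kc[OF k]])
      finally have a: "\<bar>blinfun_apply k z / \<epsilon>\<bar> \<le> c / \<epsilon>" using e by (simp add: divide_right_mono)
      have "\<lfloor>blinfun_apply k z / \<epsilon>\<rfloor> \<le> m" unfolding m_def using a by (metis abs_le_D1 floor_le_ceiling floor_mono order_trans)
      moreover have "-m \<le> \<lfloor>blinfun_apply k z / \<epsilon>\<rfloor>" unfolding m_def using a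
        by (smt (verit, ccfv_SIG) abs_le_D2 ceiling_less_cancel ceiling_minus floor_le_ceiling le_floor_iff of_int_less_iff)
      ultimately show ?thesis by simp
    qed
    then show ?thesis unfolding cell_def by auto
  qed
  define C where "C = cell ` cball 0 1"
  have fC: "finite C"
  proof (rule finite_subset[of _ "\<Pi>\<^sub>E k\<in>F. {-m..m}"])
    show "C \<subseteq> (\<Pi>\<^sub>E k\<in>F. {-m..m})" unfolding C_def using cellin by blast
    show "finite (\<Pi>\<^sub>E k\<in>F. {-m..m})" using fF by (intro finite_PiE) auto
  qed
  define pick where "pick q = (SOME z. z \<in> cball (0::'z) 1 \<and> cell z = q)" for q
  have pick: "pick (cell z) \<in> cball 0 1 \<and> cell (pick (cell z)) = cell z" if "z \<in> cball 0 1" for z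
    unfolding pick_def by (rule someI[of _ z]) (use that in auto)
  show ?thesis
  proof (intro exI conjI ballI)
    show "finite (pick ` C)" using fC by simp
    show "pick ` C \<subseteq> cball 0 1" using pick unfolding C_def by auto
  next
    fix z :: 'z assume z: "z \<in> cball 0 1"
    show "\<exists>w\<in>pick ` C. \<forall>k\<in>F. \<bar>blinfun_apply k z - blinfun_apply k w\<bar> < \<epsilon>"
    proof (intro bexI ballI)
      show "pick (cell z) \<in> pick ` C" unfolding C_def using z by simp
    next
      fix k assume k: "k \<in> F"
      have "cell (pick (cell z)) k = cell z k" using pick[OF z] by simp
      then have "\<lfloor>blinfun_apply k z / \<epsilon>\<rfloor> = \<lfloor>blinfun_apply k (pick (cell z)) / \<epsilon>\<rfloor>"
        unfolding cell_def using k by simp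
      from floor_eq_close[OF this] have "\<bar>(blinfun_apply k z - blinfun_apply k (pick (cell z))) / \<epsilon>\<bar> < 1"
        by (simp add: diff_divide_distrib)
      moreover have "\<bar>(blinfun_apply k z - blinfun_apply k (pick (cell z))) / \<epsilon>\<bar> = \<bar>blinfun_apply k z - blinfun_apply k (pick (cell z))\<bar> / \<epsilon>"
        using e by (simp add: abs_divide)
      ultimately show "\<bar>blinfun_apply k z - blinfun_apply k (pick (cell z))\<bar> < \<epsilon>" using e by (simp add: divide_less_eq)
    qed
  qed
qed

lemma bcontfun_Cauchy_convergent:
  fixes f :: "nat \<Rightarrow> ('a::topological_space \<Rightarrow>\<^sub>C 'b::complete_space)"
  assumes "Cauchy f"
  shows "convergent f"
proof -
  obtain g where "uniform_limit UNIV f g sequentially"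
    using \<open>Cauchy f\<close> uniformly_convergent_eq_cauchy[of "\<lambda>_. True" f]
    unfolding Cauchy_def uniform_limit_sequentially_iff
    by (metis dist_fun_lt_imp_dist_val_lt)
  from uniform_limit_bcontfunE[OF this sequentially_bot]
  obtain l' where "g = apply_bcontfun l'" "(f \<longlonglongrightarrow> l')" by metis
  then show "convergent f"
    by (intro convergentI)
qed

lemma closed_complete_bcontfun:
  fixes S :: "('a::topological_space \<Rightarrow>\<^sub>C 'b::complete_space) set"
  assumes "closed S"
  shows "complete S"
proof (rule completeI)
  fix f :: "nat \<Rightarrow> ('a \<Rightarrow>\<^sub>C 'b)" assume f: "\<forall>n. f n \<in> S" "Cauchy f"
  then obtain l where l: "f \<longlonglongrightarrow> l" using bcontfun_Cauchy_convergent convergent_def by blast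
  have "l \<in> S" by (rule closed_sequentially[OF assms _ l]) (use f in simp)
  then show "\<exists>l\<in>S. f \<longlonglongrightarrow> l" using l by blast
qed



context
  fixes E :: "'a::t2_space set" and T :: "'z::banach \<Rightarrow> ('a \<Rightarrow>\<^sub>C real) set"
  assumes cU: "compact (UNIV::'a set)" and cE: "closed E" and qc: "quot_compact_op (vanishing_ideal E) T"
begin

lemma QL: "quot_linear (vanishing_ideal E) T"
  using qc by (simp add: quot_compact_op_def)

lemma Tc: "\<exists>c. T z = coset (vanishing_ideal E) c"
proof -
  have "\<forall>z. T z \<in> range (coset (vanishing_ideal E))" using QL unfolding quot_linear_def by (rule conjunct1)
  then have "T z \<in> range (coset (vanishing_ideal E))" by (rule spec)
  then show ?thesis by (auto simp: image_iff)
qed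

lemma Tlin: "x \<in> T z \<Longrightarrow> y \<in> T w \<Longrightarrow> a *\<^sub>R x + b *\<^sub>R y \<in> T (a *\<^sub>R z + b *\<^sub>R w)"
proof -
  have "\<forall>z w a b x y. x \<in> T z \<longrightarrow> y \<in> T w \<longrightarrow> a *\<^sub>R x + b *\<^sub>R y \<in> T (a *\<^sub>R z + b *\<^sub>R w)"
    using QL unfolding quot_linear_def by (rule conjunct2)
  then show "x \<in> T z \<Longrightarrow> y \<in> T w \<Longrightarrow> a *\<^sub>R x + b *\<^sub>R y \<in> T (a *\<^sub>R z + b *\<^sub>R w)" by simp
qed

lemma Tcomp: fixes s :: "nat \<Rightarrow> 'z" assumes sb: "\<And>n. norm (s n) \<le> 1" shows "\<exists>r L. strict_mono r \<and> L \<in> range (coset (vanishing_ideal E)) \<and>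
               (\<lambda>n. qdist (T (s (r n))) L) \<longlonglongrightarrow> 0"
proof -
  have "\<forall>s::nat \<Rightarrow> 'z. (\<forall>n. norm (s n) \<le> 1) \<longrightarrow>
        (\<exists>r L. strict_mono r \<and> L \<in> range (coset (vanishing_ideal E)) \<and>
               (\<lambda>n. qdist (T (s (r n))) L) \<longlonglongrightarrow> 0)"
    using qc unfolding quot_compact_op_def by (rule conjunct2)
  then have "(\<forall>n. norm (s n) \<le> 1) \<longrightarrow> ?thesis" by (rule spec)
  then show ?thesis using sb by blast
qed

lemma T_ne: "T z \<noteq> {}"
  using Tc[of z] self_in_coset by blast

definition R :: "'z \<Rightarrow> ('a \<Rightarrow>\<^sub>C real)" where "R z = (SOME f. f \<in> T z)"

lemma Rin: "R z \<in> T z"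
  unfolding R_def using T_ne[of z] by (simp add: some_in_eq)

lemma agreeT: "f \<in> T z \<Longrightarrow> g \<in> T z \<Longrightarrow> e \<in> E \<Longrightarrow> apply_bcontfun f e = apply_bcontfun g e"
  using Tc[of z] agree by metis

lemma Rlin: "e \<in> E \<Longrightarrow> R (a *\<^sub>R z + b *\<^sub>R w) e = a * R z e + b * R w e"
proof -
  assume e: "e \<in> E"
  have "a *\<^sub>R R z + b *\<^sub>R R w \<in> T (a *\<^sub>R z + b *\<^sub>R w)" using Tlin Rin by blast
  from agreeT[OF Rin this e] show ?thesis by simp
qed

lemma Rscale: "e \<in> E \<Longrightarrow> R (a *\<^sub>R z) e = a * R z e"
  using Rlin[of e a z 0 z] by simp

lemma Radd: "e \<in> E \<Longrightarrow> R (z + w) e = R z e + R w e"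
  using Rlin[of e 1 z 1 w] by simp

lemma R_qnorm: "e \<in> E \<Longrightarrow> \<bar>R z e\<bar> \<le> qnorm (T z)"
proof (rule qnorm_ge[OF T_ne])
  fix a assume "e \<in> E" "a \<in> T z"
  then have "R z e = a e" using agreeT Rin by blast
  then show "\<bar>R z e\<bar> \<le> norm a" using eval_le by metis
qed

lemma R_qdist:
  assumes L: "L = coset (vanishing_ideal E) l" and e: "e \<in> E"
  shows "\<bar>R z e - l e\<bar> \<le> qdist (T z) L"
proof (rule qdist_ge[OF T_ne])
  show "L \<noteq> {}" using L self_in_coset by blast
  fix a b assume a: "a \<in> T z" and b: "b \<in> L"
  have "R z e = a e" using agreeT Rin a e by blast
  moreover have "l e = b e" using agree b L e by metis
  ultimately have "R z e - l e = apply_bcontfun (a - b) e" by simp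
  then show "\<bar>R z e - l e\<bar> \<le> norm (a - b)" using eval_le by metis
qed

lemma qnorm_qdist:
  assumes L: "L = coset (vanishing_ideal E) l"
  shows "qnorm (T z) \<le> qdist (T z) L + norm l"
proof -
  have "qnorm (T z) - norm l \<le> qdist (T z) L"
  proof (rule qdist_ge[OF T_ne])
    show "L \<noteq> {}" using L self_in_coset by blast
    fix a b assume a: "a \<in> T z" and b: "b \<in> L"
    obtain c where c: "T z = coset (vanishing_ideal E) c" using Tc by blast
    have "a - (b - l) \<in> T z"
      using a b unfolding c L mem_coset mem_VI by simp
    then have "qnorm (T z) \<le> norm (a - (b - l))" by (rule qnorm_le)
    also have "\<dots> = norm ((a - b) + l)" by (simp add: algebra_simps)
    also have "\<dots> \<le> norm (a - b) + norm l" by (rule norm_triangle_ineq)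
    finally show "qnorm (T z) - norm l \<le> norm (a - b)" by simp
  qed
  then show ?thesis by simp
qed

lemma bddT: "bdd_above ((\<lambda>z. qnorm (T z)) ` cball 0 1)"
proof (rule ccontr)
  assume nb: "\<not> ?thesis"
  have "\<forall>n::nat. \<exists>z. norm z \<le> 1 \<and> real n < qnorm (T z)"
  proof
    fix n :: nat
    from nb have "\<not> (\<forall>z\<in>cball 0 1. qnorm (T z) \<le> real n)" unfolding bdd_above_def by auto
    then show "\<exists>z. norm z \<le> 1 \<and> real n < qnorm (T z)" by (auto simp: not_le)
  qed
  then obtain s where s0: "\<forall>n. norm (s n) \<le> 1 \<and> real n < qnorm (T (s n))" by (rule choice[THEN exE])
  then have s: "\<And>n. norm (s n) \<le> 1" "\<And>n. real n < qnorm (T (s n))" by simp_all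
  have "\<exists>r L. strict_mono r \<and> L \<in> range (coset (vanishing_ideal E)) \<and> (\<lambda>n. qdist (T (s (r n))) L) \<longlonglongrightarrow> 0"
    by (rule Tcomp) (rule s(1))
  then obtain r L where r: "strict_mono r" and L: "L \<in> range (coset (vanishing_ideal E))"
    and lim: "(\<lambda>n. qdist (T (s (r n))) L) \<longlonglongrightarrow> 0"
    by (elim exE conjE)
  obtain l where l: "L = coset (vanishing_ideal E) l" using L by blast
  have "\<forall>\<^sub>F n in sequentially. qdist (T (s (r n))) L < 1"
    using order_tendstoD(2)[OF lim] by simp
  then obtain N where N: "\<And>n. n \<ge> N \<Longrightarrow> qdist (T (s (r n))) L < 1"
    unfolding eventually_sequentially by blast
  define n where "n = max N (nat \<lceil>1 + norm l\<rceil>)"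
  have "real (r n) < qnorm (T (s (r n)))" by (rule s(2))
  also have "\<dots> \<le> qdist (T (s (r n))) L + norm l" by (rule qnorm_qdist[OF l])
  also have "\<dots> < 1 + norm l" using N[of n] n_def by simp
  finally have "real (r n) < 1 + norm l" .
  moreover have "n \<le> r n" using r by (rule seq_suble)
  moreover have "1 + norm l \<le> real n" unfolding n_def by linarith
  ultimately show False by linarith
qed

lemma M_ge: "norm z \<le> 1 \<Longrightarrow> qnorm (T z) \<le> quot_opnorm T"
  unfolding quot_opnorm_def by (rule cSUP_upper[OF _ bddT]) simp

lemma M0: "0 \<le> quot_opnorm T"
proof -
  have "0 \<le> qnorm (T 0)" by (rule qnorm_ge[OF T_ne]) simp
  also have "\<dots> \<le> quot_opnorm T" by (rule M_ge) simp
  finally show ?thesis .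
qed

lemma Rbound: "e \<in> E \<Longrightarrow> \<bar>R z e\<bar> \<le> quot_opnorm T * norm z"
proof (rule scale_bound[where f = "\<lambda>z. R z e"])
  assume e: "e \<in> E"
  show "R (a *\<^sub>R z) e = a * R z e" for a z using Rscale[OF e] .
  show "\<bar>R u e\<bar> \<le> quot_opnorm T" if "norm u \<le> 1" for u
    using R_qnorm[OF e, of u] M_ge[OF that] by linarith
qed

lemma TB:
  assumes e: "0 < \<epsilon>"
  shows "\<exists>N. finite N \<and> N \<subseteq> cball 0 1 \<and> (\<forall>z\<in>cball 0 1. \<exists>w\<in>N. \<forall>e\<in>E. \<bar>R z e - R w e\<bar> < \<epsilon>)"
proof (rule ccontr)
  assume "\<not> ?thesis"
  then have *: "\<forall>N. finite N \<longrightarrow> N \<subseteq> cball 0 1 \<longrightarrow> \<not> (\<forall>z\<in>cball 0 1. \<exists>w\<in>N. \<forall>e\<in>E. \<bar>R z e - R w e\<bar> < \<epsilon>)"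
    by simp
  let ?Q = "\<lambda>x n r. r \<in> cball (0::'z) 1 \<and> (\<forall>m<n. \<exists>e\<in>E. \<epsilon> \<le> \<bar>R r e - R (x m) e\<bar>)"
  have "\<exists>x. \<forall>n::nat. ?Q x n (x n)"
  proof (rule dependent_wellorder_choice)
    fix n :: nat and x :: "nat \<Rightarrow> 'z" assume xh: "\<And>y. y < n \<Longrightarrow> ?Q x y (x y)"
    have sub: "x ` {..<n} \<subseteq> cball 0 1" using xh by auto
    have fin: "finite (x ` {..<n})" by simp
    have "\<not> (\<forall>z\<in>cball 0 1. \<exists>w\<in>x ` {..<n}. \<forall>e\<in>E. \<bar>R z e - R w e\<bar> < \<epsilon>)"
      by (rule *[rule_format, OF fin sub])
    then obtain z where z: "z \<in> cball 0 1" "\<not> (\<exists>w\<in>x ` {..<n}. \<forall>e\<in>E. \<bar>R z e - R w e\<bar> < \<epsilon>)"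
      by blast
    show "\<exists>r. ?Q x n r"
    proof (intro exI conjI allI impI)
      show "z \<in> cball 0 1" by (rule z(1))
      fix m assume "m < n"
      then have "x m \<in> x ` {..<n}" by simp
      with z(2) have "\<exists>e\<in>E. \<not> \<bar>R z e - R (x m) e\<bar> < \<epsilon>" by blast
      then show "\<exists>e\<in>E. \<epsilon> \<le> \<bar>R z e - R (x m) e\<bar>" by (simp add: not_less)
    qed
  qed simp
  then obtain x :: "nat \<Rightarrow> 'z" where x: "\<And>n. ?Q x n (x n)" by blast
  have nx: "norm (x n) \<le> 1" for n using x[of n] by simp
  have "\<exists>r L. strict_mono r \<and> L \<in> range (coset (vanishing_ideal E)) \<and> (\<lambda>n. qdist (T (x (r n))) L) \<longlonglongrightarrow> 0"
    by (rule Tcomp) (rule nx)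
  then obtain r L where r: "strict_mono r" and L: "L \<in> range (coset (vanishing_ideal E))"
    and lim: "(\<lambda>n. qdist (T (x (r n))) L) \<longlonglongrightarrow> 0"
    by (elim exE conjE)
  obtain l where l: "L = coset (vanishing_ideal E) l" using L by blast
  have "\<forall>\<^sub>F n in sequentially. qdist (T (x (r n))) L < \<epsilon>/2"
    using order_tendstoD(2)[OF lim, of "\<epsilon>/2"] e by simp
  then obtain N where N: "\<And>n. n \<ge> N \<Longrightarrow> qdist (T (x (r n))) L < \<epsilon>/2"
    unfolding eventually_sequentially by blast
  have "r N < r (Suc N)" using r by (simp add: strict_mono_def)
  then obtain e where e: "e \<in> E" "\<epsilon> \<le> \<bar>R (x (r (Suc N))) e - R (x (r N)) e\<bar>"
    using x[of "r (Suc N)"] by blast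
  have a: "\<bar>R (x (r (Suc N))) e - l e\<bar> < \<epsilon>/2"
    using R_qdist[OF l e(1), of "x (r (Suc N))"] N[of "Suc N"] by simp
  have b: "\<bar>R (x (r N)) e - l e\<bar> < \<epsilon>/2"
    using R_qdist[OF l e(1), of "x (r N)"] N[of N] by simp
  from a b e(2) show False unfolding abs_less_iff abs_le_iff by linarith
qed

definition phi :: "'a \<Rightarrow> ('z \<Rightarrow>\<^sub>L real)" where "phi e = Blinfun (\<lambda>z. R z e)"

lemma bl_R: "e \<in> E \<Longrightarrow> bounded_linear (\<lambda>z. R z e)"
proof (rule bounded_linear_intro[where K = "quot_opnorm T"])
  assume e: "e \<in> E"
  show "R (x + y) e = R x e + R y e" for x y by (rule Radd[OF e])
  show "R (r *\<^sub>R x) e = r *\<^sub>R R x e" for r x using Rscale[OF e] by simp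
  show "norm (R x e) \<le> norm x * quot_opnorm T" for x using Rbound[OF e, of x] by (simp add: mult.commute)
qed

lemma phi_apply: "e \<in> E \<Longrightarrow> blinfun_apply (phi e) z = R z e"
  unfolding phi_def using bounded_linear_Blinfun_apply[OF bl_R] by simp

lemma phi_norm: "e \<in> E \<Longrightarrow> norm (phi e) \<le> quot_opnorm T"
  by (rule norm_blinfun_bound[OF M0]) (simp add: phi_apply Rbound)

lemma phi_cont: "continuous_on E phi"
  unfolding continuous_on_topological
proof (intro ballI allI impI)
  fix x0 B assume x0: "x0 \<in> E" and B: "open B" "phi x0 \<in> B"
  obtain \<epsilon> where ep: "0 < \<epsilon>" and eB: "ball (phi x0) \<epsilon> \<subseteq> B" using B openE by metis
  have "0 < \<epsilon>/4" using ep by simp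
  from TB[OF this] obtain N where N: "finite N" "N \<subseteq> cball 0 1"
    "\<And>z. z \<in> cball 0 1 \<Longrightarrow> \<exists>w\<in>N. \<forall>e\<in>E. \<bar>R z e - R w e\<bar> < \<epsilon>/4" by blast
  define A where "A = (\<Inter>w\<in>N. {y. \<bar>R w y - R w x0\<bar> < \<epsilon>/4})"
  show "\<exists>A. open A \<and> x0 \<in> A \<and> (\<forall>y\<in>E. y \<in> A \<longrightarrow> phi y \<in> B)"
  proof (intro exI conjI ballI impI)
    show "open A" unfolding A_def
      by (intro open_INT N(1) ballI open_Collect_less continuous_intros continuous_on_apply_bcontfun)
    show "x0 \<in> A" unfolding A_def using ep by simp
    fix y assume y: "y \<in> E" "y \<in> A"
    have "\<bar>R z y - R z x0\<bar> \<le> (3*\<epsilon>/4) * norm z" for z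
    proof (rule scale_bound[where f = "\<lambda>z. R z y - R z x0"])
      show "R (a *\<^sub>R z) y - R (a *\<^sub>R z) x0 = a * (R z y - R z x0)" for a z
        using Rscale[OF y(1)] Rscale[OF x0] by (simp add: algebra_simps)
      fix u :: 'z assume u: "norm u \<le> 1"
      then have "u \<in> cball 0 1" by simp
      then obtain w where w: "w \<in> N" "\<forall>e\<in>E. \<bar>R u e - R w e\<bar> < \<epsilon>/4" using N(3) by blast
      have 1: "\<bar>R u y - R w y\<bar> < \<epsilon>/4" using w(2) y(1) by blast
      have 2: "\<bar>R u x0 - R w x0\<bar> < \<epsilon>/4" using w(2) x0 by blast
      have 3: "\<bar>R w y - R w x0\<bar> < \<epsilon>/4" using y(2) w(1) unfolding A_def by blast
      from 1 2 3 show "\<bar>R u y - R u x0\<bar> \<le> 3*\<epsilon>/4" unfolding abs_less_iff abs_le_iff by linarith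
    qed
    then have "norm (phi y - phi x0) \<le> 3*\<epsilon>/4"
      using ep by (intro norm_blinfun_bound) (auto simp: blinfun.diff_left phi_apply y(1) x0)
    then have "phi y \<in> ball (phi x0) \<epsilon>" using ep by (simp add: dist_norm norm_minus_commute)
    then show "phi y \<in> B" using eB by blast
  qed
qed

lemma main_ctx:
  "\<exists>S :: 'z \<Rightarrow> ('a \<Rightarrow>\<^sub>C real).
           compact_op S \<and>
           (\<forall>z. coset (vanishing_ideal E) (S z) = T z) \<and>
           onorm S = quot_opnorm T"
proof -
  define M where "M = quot_opnorm T"
  have M0': "0 \<le> M" unfolding M_def by (rule M0)
  obtain \<Phi> where \<Phi>c: "continuous_on UNIV \<Phi>" and \<Phi>E: "\<And>e. e\<in>E \<Longrightarrow> \<Phi> e = phi e"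
      and \<Phi>b: "\<And>x. norm (\<Phi> x) \<le> M"
    using extend_banach[OF cU cE phi_cont phi_norm M0] unfolding M_def by blast
  define S where "S z = Bcontfun (\<lambda>x. blinfun_apply (\<Phi> x) z)" for z
  have Sbc: "(\<lambda>x. blinfun_apply (\<Phi> x) z) \<in> bcontfun" for z
  proof (rule bcontfun_normI)
    show "continuous_on UNIV (\<lambda>x. blinfun_apply (\<Phi> x) z)"
      by (rule blinfun.continuous_on[OF \<Phi>c continuous_on_const])
    fix x
    have "norm (blinfun_apply (\<Phi> x) z) \<le> norm (\<Phi> x) * norm z" by (rule norm_blinfun)
    also have "\<dots> \<le> M * norm z" using \<Phi>b[of x] by (simp add: mult_right_mono)
    finally show "norm (blinfun_apply (\<Phi> x) z) \<le> M * norm z" .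
  qed
  have Sapp: "apply_bcontfun (S z) x = blinfun_apply (\<Phi> x) z" for z x
    unfolding S_def using Bcontfun_inverse[OF Sbc] by simp
  have Snorm: "norm (S z) \<le> M * norm z" for z
  proof (rule norm_bound)
    fix x
    have "norm (blinfun_apply (\<Phi> x) z) \<le> norm (\<Phi> x) * norm z" by (rule norm_blinfun)
    also have "\<dots> \<le> M * norm z" using \<Phi>b[of x] by (simp add: mult_right_mono)
    finally show "norm (apply_bcontfun (S z) x) \<le> M * norm z" by (simp add: Sapp)
  qed
  have bl: "bounded_linear S"
  proof (rule bounded_linear_intro[where K = M])
    show "S (x + y) = S x + S y" for x y
      by (rule bcontfun_eqI) (simp add: Sapp blinfun.add_right)
    show "S (r *\<^sub>R x) = r *\<^sub>R S x" for r x
      by (rule bcontfun_eqI) (simp add: Sapp blinfun.scaleR_right)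
    show "norm (S x) \<le> norm x * M" for x using Snorm[of x] by (simp add: mult.commute)
  qed
  have Sdiff: "S z - c \<in> vanishing_ideal E" if "T z = coset (vanishing_ideal E) c" for z c
  proof -
    have "R z \<in> coset (vanishing_ideal E) c" using Rin[of z] that by simp
    then have "apply_bcontfun (S z) e = apply_bcontfun c e" if e: "e \<in> E" for e
      using agree[OF _ e] e by (simp add: Sapp \<Phi>E phi_apply)
    then show ?thesis unfolding mem_VI by simp
  qed
  have Sin: "S z \<in> T z" for z
  proof -
    obtain c where c: "T z = coset (vanishing_ideal E) c" using Tc by blast
    show ?thesis unfolding c mem_coset by (rule Sdiff[OF c])
  qed
  have Scos: "coset (vanishing_ideal E) (S z) = T z" for z
  proof -
    obtain c where c: "T z = coset (vanishing_ideal E) c" using Tc by blast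
    show ?thesis unfolding c by (rule coset_eq[OF Sdiff[OF c]])
  qed
  have on: "onorm S = M"
  proof (rule antisym)
    show "onorm S \<le> M" by (rule onorm_bound[OF M0' Snorm])
    show "M \<le> onorm S" unfolding M_def quot_opnorm_def
    proof (rule cSUP_least)
      show "cball (0::'z) 1 \<noteq> {}" by simp
      fix z :: 'z assume z: "z \<in> cball 0 1"
      have "qnorm (T z) \<le> norm (S z)" by (rule qnorm_le[OF Sin])
      also have "\<dots> \<le> onorm S * norm z" by (rule onorm[OF bl])
      also have "\<dots> \<le> onorm S * 1" using z onorm_pos_le[OF bl] by (intro mult_left_mono) auto
      finally show "qnorm (T z) \<le> onorm S" by simp
    qed
  qed
  have cpt: "compact (closure (S ` cball 0 1))"
    unfolding compact_eq_totally_bounded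
  proof (intro conjI allI impI)
    show "complete (closure (S ` cball 0 1))" by (rule closed_complete_bcontfun) simp
    fix \<epsilon> :: real assume ep: "0 < \<epsilon>"
    define \<delta> where "\<delta> = \<epsilon>/2"
    have d3: "0 < \<delta>/3" using ep \<delta>_def by simp
    have "compact (range \<Phi>)" by (rule compact_continuous_image[OF \<Phi>c cU])
    then obtain F where F: "finite F" "range \<Phi> \<subseteq> (\<Union>k\<in>F. ball k (\<delta>/3))"
      unfolding compact_eq_totally_bounded using d3 by blast
    obtain N where N: "finite N" "N \<subseteq> cball 0 1"
      "\<forall>z\<in>cball 0 1. \<exists>w\<in>N. \<forall>k\<in>F. \<bar>blinfun_apply k z - blinfun_apply k w\<bar> < \<delta>/3"
      using finite_net_functionals[OF F(1) d3] by blast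
    have sub: "S ` cball 0 1 \<subseteq> (\<Union>w\<in>N. cball (S w) \<delta>)"
    proof
      fix y assume "y \<in> S ` cball 0 1"
      then obtain z where z: "z \<in> cball 0 1" "y = S z" by blast
      then obtain w where w: "w \<in> N" "\<forall>k\<in>F. \<bar>blinfun_apply k z - blinfun_apply k w\<bar> < \<delta>/3"
        using N(3) by blast
      have wb: "w \<in> cball 0 1" using w(1) N(2) by blast
      have "dist (S w) (S z) \<le> \<delta>"
      proof (rule dist_bound)
        fix x
        have "\<Phi> x \<in> range \<Phi>" by simp
        then obtain k where k: "k \<in> F" "\<Phi> x \<in> ball k (\<delta>/3)" using F(2) by blast
        have nk: "norm (\<Phi> x - k) < \<delta>/3" using k(2) by (simp add: dist_norm norm_minus_commute)
        have bz: "\<bar>blinfun_apply (\<Phi> x) u - blinfun_apply k u\<bar> \<le> \<delta>/3" if "u \<in> cball 0 1" for u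
        proof -
          have "\<bar>blinfun_apply (\<Phi> x) u - blinfun_apply k u\<bar> = norm (blinfun_apply (\<Phi> x - k) u)"
            by (simp add: blinfun.diff_left)
          also have "\<dots> \<le> norm (\<Phi> x - k) * norm u" by (rule norm_blinfun)
          also have "\<dots> \<le> (\<delta>/3) * 1" using nk that d3 by (intro mult_mono) auto
          finally show ?thesis by simp
        qed
        have 1: "\<bar>blinfun_apply (\<Phi> x) z - blinfun_apply k z\<bar> \<le> \<delta>/3" by (rule bz[OF z(1)])
        have 2: "\<bar>blinfun_apply (\<Phi> x) w - blinfun_apply k w\<bar> \<le> \<delta>/3" by (rule bz[OF wb])
        have 3: "\<bar>blinfun_apply k z - blinfun_apply k w\<bar> < \<delta>/3" using w(2) k(1) by blast
        have "\<bar>blinfun_apply (\<Phi> x) w - blinfun_apply (\<Phi> x) z\<bar> \<le> \<delta>"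
          using 1 2 3 unfolding abs_less_iff abs_le_iff by linarith
        then show "dist (apply_bcontfun (S w) x) (apply_bcontfun (S z) x) \<le> \<delta>"
          by (simp add: Sapp dist_real_def)
      qed
      then show "y \<in> (\<Union>w\<in>N. cball (S w) \<delta>)" using w(1) z(2) by auto
    qed
    have "closure (S ` cball 0 1) \<subseteq> (\<Union>w\<in>N. cball (S w) \<delta>)"
      by (rule closure_minimal[OF sub]) (use N(1) in \<open>auto intro!: closed_UN\<close>)
    also have "\<dots> \<subseteq> (\<Union>x\<in>S ` N. ball x \<epsilon>)" using ep \<delta>_def by auto
    finally show "\<exists>k. finite k \<and> closure (S ` cball 0 1) \<subseteq> (\<Union>x\<in>k. ball x \<epsilon>)"
      using N(1) by blast
  qed
  show ?thesis
    by (rule exI[of _ S]) (simp add: compact_op_def bl cpt Scos on[unfolded M_def])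
qed

end

theorem mainTheorem1:
  fixes E :: "'a::t2_space set"
    and T :: "'z::banach \<Rightarrow> ('a \<Rightarrow>\<^sub>C real) set"
  assumes "compact (UNIV :: 'a set)"
    and "closed E"
    and "quot_compact_op (vanishing_ideal E) T"
  shows "\<exists>S :: 'z \<Rightarrow> ('a \<Rightarrow>\<^sub>C real).
           compact_op S \<and>
           (\<forall>z. coset (vanishing_ideal E) (S z) = T z) \<and>
           onorm S = quot_opnorm T"
  by (rule main_ctx[OF assms])

end
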